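(* Let $\mathcal F,\mathcal G\subset 2^{[n]}$ be cross-intersecting families, i.e. $A\cap B\neq\emptyset$ for all $A\in\mathcal F$, $B\in\mathcal G$. Then $$|\mathcal F|+|\mathcal G|\le \max\{|\mathcal F^{\downarrow}|,|\mathcal G^{\downarrow}|\}.$$
   Context: $[n]=\{1,\dots,n\}$. For a family $\mathcal F$, $\mathcal F^{\downarrow}=\{G:\exists F\in\mathcal F,\ G\subset F\}$ is the down-set generated by $\mathcal F$. *)

theory Defs
  imports Main
begin

definition downset :: "'a set set \<Rightarrow> 'a set set" where
  "downset F = {G. \<exists>A\<in>F. G \<subseteq> A}"

end

theory Submission
  imports Defs
begin

lemma split_card:
  assumes fin: "finite S" and x: "x \<notin> S" and H: "H \<subseteq> Pow (insert x S)"
  shows "card H = card {A\<in>H. x \<notin> A} + card {A. A \<subseteq> S \<and> insert x A \<in> H}"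
proof -
  have finH: "finite H" using H fin by (meson finite_Pow_iff finite_insert finite_subset)
  have eq: "H = {A\<in>H. x \<notin> A} \<union> {A\<in>H. x \<in> A}" by blast
  have img: "{A\<in>H. x \<in> A} = insert x ` {A. A \<subseteq> S \<and> insert x A \<in> H}"
  proof
    show "{A\<in>H. x \<in> A} \<subseteq> insert x ` {A. A \<subseteq> S \<and> insert x A \<in> H}"
    proof
      fix A assume A: "A \<in> {A\<in>H. x \<in> A}"
      then have "A - {x} \<subseteq> S" "insert x (A - {x}) = A" using H by auto
      then show "A \<in> insert x ` {A. A \<subseteq> S \<and> insert x A \<in> H}" using A
        by (metis (mono_tags, lifting) image_eqI mem_Collect_eq)
    qed
  qed auto
  have inj: "inj_on (insert x) {A. A \<subseteq> S \<and> insert x A \<in> H}"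
    unfolding inj_on_def using x by (metis insert_ident mem_Collect_eq subsetD)
  have "card H = card {A\<in>H. x \<notin> A} + card {A\<in>H. x \<in> A}"
    by (subst eq, rule card_Un_disjoint) (use finH in auto)
  also have "card {A\<in>H. x \<in> A} = card {A. A \<subseteq> S \<and> insert x A \<in> H}"
    using img inj by (simp add: card_image)
  finally show ?thesis .
qed

lemma arith_aux:
  fixes d0 d1 u0 u1 c0 c1 p :: nat
  assumes "p * c0 \<le> d0 * u0" "p * c1 \<le> d1 * u1" "d1 \<le> d0" "u0 \<le> u1"
  shows "2 * p * (c0 + c1) \<le> (d0 + d1) * (u0 + u1)"
proof -
  obtain a where a: "d0 = d1 + a" using assms(3) le_Suc_ex by blast
  obtain b where b: "u1 = u0 + b" using assms(4) le_Suc_ex by blast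
  have "2 * p * (c0 + c1) \<le> 2 * (d0 * u0 + d1 * u1)" using add_mono[OF assms(1,2)] by (simp add: algebra_simps)
  also have "\<dots> \<le> (d0 + d1) * (u0 + u1)" unfolding a b by (simp add: algebra_simps)
  finally show ?thesis .
qed

lemma kleitman:
  assumes "finite S"
  shows "D \<subseteq> Pow S \<Longrightarrow> (\<forall>A\<in>D. \<forall>B. B \<subseteq> A \<longrightarrow> B \<in> D) \<Longrightarrow> U \<subseteq> Pow S \<Longrightarrow>
    (\<forall>A\<in>U. \<forall>B. A \<subseteq> B \<and> B \<subseteq> S \<longrightarrow> B \<in> U) \<Longrightarrow>
    2 ^ card S * card (D \<inter> U) \<le> card D * card U"
  using assms
proof (induction S arbitrary: D U rule: finite_induct)
  case empty
  then have "D \<subseteq> {{}}" "U \<subseteq> {{}}" by auto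
  then show ?case
  proof (cases "D = {{}} \<and> U = {{}}")
    case True then show ?thesis by simp
  next
    case False
    then have "D \<inter> U = {}" using \<open>D \<subseteq> {{}}\<close> \<open>U \<subseteq> {{}}\<close> by blast
    then show ?thesis by simp
  qed
next
  case (insert x S)
  define D0 where "D0 = {A\<in>D. x \<notin> A}"
  define D1 where "D1 = {A. A \<subseteq> S \<and> insert x A \<in> D}"
  define U0 where "U0 = {A\<in>U. x \<notin> A}"
  define U1 where "U1 = {A. A \<subseteq> S \<and> insert x A \<in> U}"
  have D0P: "D0 \<subseteq> Pow S" using insert.prems(1) unfolding D0_def by auto
  have D1P: "D1 \<subseteq> Pow S" unfolding D1_def by auto
  have U0P: "U0 \<subseteq> Pow S" using insert.prems(3) unfolding U0_def by auto
  have U1P: "U1 \<subseteq> Pow S" unfolding U1_def by auto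
  have D0d: "\<forall>A\<in>D0. \<forall>B. B \<subseteq> A \<longrightarrow> B \<in> D0" using insert.prems(2) unfolding D0_def by blast
  have D1d: "\<forall>A\<in>D1. \<forall>B. B \<subseteq> A \<longrightarrow> B \<in> D1" using insert.prems(2) unfolding D1_def
    by (metis (no_types, lifting) insert_mono mem_Collect_eq order_trans)
  have U0u: "\<forall>A\<in>U0. \<forall>B. A \<subseteq> B \<and> B \<subseteq> S \<longrightarrow> B \<in> U0" using insert.prems(4) insert.hyps(2) unfolding U0_def
    by blast
  have U1u: "\<forall>A\<in>U1. \<forall>B. A \<subseteq> B \<and> B \<subseteq> S \<longrightarrow> B \<in> U1" using insert.prems(4) unfolding U1_def
    by (metis (no_types, lifting) insert_mono insert_subset mem_Collect_eq subset_insertI)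
  have IH0: "2 ^ card S * card (D0 \<inter> U0) \<le> card D0 * card U0"
    using insert.IH[OF D0P D0d U0P U0u] insert.hyps(1) by simp
  have IH1: "2 ^ card S * card (D1 \<inter> U1) \<le> card D1 * card U1"
    using insert.IH[OF D1P D1d U1P U1u] insert.hyps(1) by simp
  have finPS: "finite (Pow S)" using insert.hyps(1) by simp
  have "D1 \<subseteq> D0" using insert.prems(2) insert.hyps(2) unfolding D0_def D1_def by blast
  then have dd: "card D1 \<le> card D0" using D0P finPS by (meson card_mono finite_subset)
  have "U0 \<subseteq> U1"
  proof
    fix A assume A: "A \<in> U0"
    then have "A \<subseteq> S" using U0P by auto
    moreover have "insert x A \<in> U"
    proof -
      have AU: "A \<in> U" using A unfolding U0_def by simp
      have "A \<subseteq> insert x A \<and> insert x A \<subseteq> insert x S" using \<open>A \<subseteq> S\<close> by auto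
      then show ?thesis using insert.prems(4) AU by blast
    qed
    ultimately show "A \<in> U1" unfolding U1_def by simp
  qed
  then have uu: "card U0 \<le> card U1" using U1P finPS by (meson card_mono finite_subset)
  have cD: "card D = card D0 + card D1" unfolding D0_def D1_def
    by (rule split_card[OF insert.hyps(1,2) insert.prems(1)])
  have cU: "card U = card U0 + card U1" unfolding U0_def U1_def
    by (rule split_card[OF insert.hyps(1,2) insert.prems(3)])
  have cDU: "card (D \<inter> U) = card (D0 \<inter> U0) + card (D1 \<inter> U1)"
  proof -
    have "card (D \<inter> U) = card {A\<in>D \<inter> U. x \<notin> A} + card {A. A \<subseteq> S \<and> insert x A \<in> D \<inter> U}"
      by (rule split_card[OF insert.hyps(1,2)]) (use insert.prems(1) in auto)
    moreover have "{A\<in>D \<inter> U. x \<notin> A} = D0 \<inter> U0" unfolding D0_def U0_def by auto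
    moreover have "{A. A \<subseteq> S \<and> insert x A \<in> D \<inter> U} = D1 \<inter> U1" unfolding D1_def U1_def by auto
    ultimately show ?thesis by simp
  qed
  have "2 * 2 ^ card S * (card (D0 \<inter> U0) + card (D1 \<inter> U1)) \<le> (card D0 + card D1) * (card U0 + card U1)"
    by (rule arith_aux[OF IH0 IH1 dd uu])
  then show ?case using cD cU cDU insert.hyps by simp
qed

theorem theorem1p6:
  fixes n :: nat and F G :: "nat set set"
  assumes "F \<subseteq> Pow {1..n}" and "G \<subseteq> Pow {1..n}"
    and "\<And>A B. A \<in> F \<Longrightarrow> B \<in> G \<Longrightarrow> A \<inter> B \<noteq> {}"
  shows "card F + card G \<le> max (card (downset F)) (card (downset G))"
proof -
  define S where "S = {1..n}"
  define U where "U = {X. X \<subseteq> S \<and> (\<exists>A\<in>F. A \<subseteq> X)}"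
  define V where "V = {X. X \<subseteq> S \<and> (\<exists>B\<in>G. B \<subseteq> X)}"
  have finS: "finite S" unfolding S_def by simp
  have finP: "finite (Pow S)" using finS by simp
  have DP: "downset F \<subseteq> Pow S" using assms(1) unfolding downset_def S_def by auto
  have EP: "downset G \<subseteq> Pow S" using assms(2) unfolding downset_def S_def by auto
  have Dd: "\<forall>A\<in>downset F. \<forall>B. B \<subseteq> A \<longrightarrow> B \<in> downset F" unfolding downset_def by auto
  have Ed: "\<forall>A\<in>downset G. \<forall>B. B \<subseteq> A \<longrightarrow> B \<in> downset G" unfolding downset_def by auto
  have UP: "U \<subseteq> Pow S" "V \<subseteq> Pow S" unfolding U_def V_def by auto
  have Uu: "\<forall>A\<in>U. \<forall>B. A \<subseteq> B \<and> B \<subseteq> S \<longrightarrow> B \<in> U" unfolding U_def by blast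
  have Vu: "\<forall>A\<in>V. \<forall>B. A \<subseteq> B \<and> B \<subseteq> S \<longrightarrow> B \<in> V" unfolding V_def by blast
  have K1: "2 ^ card S * card (downset F \<inter> U) \<le> card (downset F) * card U"
    by (rule kleitman[OF finS DP Dd UP(1) Uu])
  have K2: "2 ^ card S * card (downset G \<inter> V) \<le> card (downset G) * card V"
    by (rule kleitman[OF finS EP Ed UP(2) Vu])
  have "F \<subseteq> downset F \<inter> U" using assms(1) unfolding downset_def U_def S_def by auto
  then have cF: "card F \<le> card (downset F \<inter> U)" using DP finP by (meson card_mono finite_Int finite_subset)
  have "G \<subseteq> downset G \<inter> V" using assms(2) unfolding downset_def V_def S_def by auto
  then have cG: "card G \<le> card (downset G \<inter> V)" using EP finP by (meson card_mono finite_Int finite_subset)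
  have UV: "card U + card V \<le> 2 ^ card S"
  proof -
    have inj: "inj_on (\<lambda>X. S - X) V" unfolding inj_on_def V_def by auto
    have disj: "U \<inter> (\<lambda>X. S - X) ` V = {}"
    proof (rule ccontr)
      assume "U \<inter> (\<lambda>X. S - X) ` V \<noteq> {}"
      then obtain X A B where "X \<in> V" "A \<in> F" "A \<subseteq> S - X" "B \<in> G" "B \<subseteq> X"
        unfolding U_def V_def by auto
      then have "A \<inter> B = {}" by auto
      then show False using assms(3) \<open>A \<in> F\<close> \<open>B \<in> G\<close> by blast
    qed
    have sub: "U \<union> (\<lambda>X. S - X) ` V \<subseteq> Pow S" using UP by auto
    have "card U + card V = card (U \<union> (\<lambda>X. S - X) ` V)"
      using disj inj UP finP
      by (subst card_Un_disjoint) (auto simp: card_image intro: finite_subset)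
    also have "\<dots> \<le> card (Pow S)" using sub finP by (rule card_mono[rotated])
    also have "\<dots> = 2 ^ card S" using finS by (simp add: card_Pow)
    finally show ?thesis .
  qed
  define M where "M = max (card (downset F)) (card (downset G))"
  have "2 ^ card S * (card F + card G) \<le> card (downset F) * card U + card (downset G) * card V"
  proof -
    have a: "2 ^ card S * card F \<le> card (downset F) * card U"
      using order_trans[OF mult_le_mono2[OF cF] K1] .
    have b: "2 ^ card S * card G \<le> card (downset G) * card V"
      using order_trans[OF mult_le_mono2[OF cG] K2] .
    show ?thesis using add_mono[OF a b] by (simp add: add_mult_distrib2)
  qed
  also have "\<dots> \<le> M * card U + M * card V" unfolding M_def
    by (intro add_mono mult_le_mono1) auto
  also have "\<dots> \<le> M * 2 ^ card S" using mult_le_mono2[OF UV, of M] by (simp add: add_mult_distrib2)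
  finally have "2 ^ card S * (card F + card G) \<le> 2 ^ card S * M" by (simp add: mult.commute)
  then show ?thesis unfolding M_def by simp
qed

end
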